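(* The class of axis-aligned rectangles over $\mathbb{R}^d$ has a lossless compression scheme of size at most $2d$ with respect to the query set consisting of the labeling oracle and the odd-one-out oracle $\mathcal{O}_{\text{odd}}$ (with the trivial inference rule).
   Context: Axis-aligned rectangles: indicator functions $h$ of $[a_1,b_1]\times\cdots\times[a_d,b_d]$ with $a_i\le b_i$, where $a_i=-\infty$ or $b_i=\infty$ is allowed (with the corresponding end open). The odd-one-out oracle on $h$ and $x\in\mathbb{R}^d$ returns $\{*\}$ if $h(x)=1$, and otherwise the set of pairs $(i,1)$ with $x_i>b_i$ and $(i,0)$ with $x_i<a_i$; an adversary returns one element of this set. For $S\subseteq\mathbb{R}^d$, $Q_h(S)$ is the set of all combinations of valid responses to all queries on points of $S$, and $q(S)|_W$ the restriction to $W\subseteq S$. A point $x$'s label is inferred by $q(S)$ if all rectangles consistent with $q(S)$ give $x$ the same label; $I(q(S))$ is the set of such points. A lossless compression scheme of size $k$: for every $h$, every $S$ on which $h$ is constant, and every $q(S)\in Q_h(S)$, there is $W\subseteq S$, $|W|\le k$, with $I(q(S))=I(q(S)|_W)$. *)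

theory Defs
  imports "HOL-Analysis.Analysis"
begin

text \<open>Points of R^d are functions from a finite index type 'd (with CARD('d) = d) to real. Infinite ends are automatically open,
  since a real coordinate never equals \<plusminus>\<infinity>.\<close>

definition is_rect :: "('d \<Rightarrow> ereal) \<Rightarrow> ('d \<Rightarrow> ereal) \<Rightarrow> bool" where
  "is_rect a b \<longleftrightarrow> (\<forall>i. a i \<noteq> \<infinity> \<and> b i \<noteq> -\<infinity> \<and> a i \<le> b i)"

definition rect_ind :: "('d \<Rightarrow> ereal) \<Rightarrow> ('d \<Rightarrow> ereal) \<Rightarrow> ('d \<Rightarrow> real) \<Rightarrow> bool" where
  "rect_ind a b x \<longleftrightarrow> (\<forall>i. a i \<le> ereal (x i) \<and> ereal (x i) \<le> b i)"

text \<open>Odd-one-out responses: Star, or Out i True for (i,1) (x_i > b_i),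
  Out i False for (i,0) (x_i < a_i).\<close>
datatype 'd resp = Star | Out 'd bool

definition odd_set :: "('d \<Rightarrow> ereal) \<Rightarrow> ('d \<Rightarrow> ereal) \<Rightarrow> ('d \<Rightarrow> real) \<Rightarrow> 'd resp set" where
  "odd_set a b x = (if rect_ind a b x then {Star}
     else {Out i True | i. b i < ereal (x i)} \<union> {Out i False | i. ereal (x i) < a i})"

text \<open>A response to both queries (labeling oracle, odd-one-out oracle) at each point:
  a function q assigning to each point a pair (label, odd-one-out answer).
  q is consistent with the rectangle (a,b) on W if all answers on W are valid for it.\<close>
definition consistent ::
  "(('d \<Rightarrow> real) \<Rightarrow> bool \<times> 'd resp) \<Rightarrow> ('d \<Rightarrow> real) set \<Rightarrow> ('d \<Rightarrow> ereal) \<Rightarrow> ('d \<Rightarrow> ereal) \<Rightarrow> bool" where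
  "consistent q W a b \<longleftrightarrow> is_rect a b \<and>
     (\<forall>x\<in>W. fst (q x) = rect_ind a b x \<and> snd (q x) \<in> odd_set a b x)"

definition inferred ::
  "(('d \<Rightarrow> real) \<Rightarrow> bool \<times> 'd resp) \<Rightarrow> ('d \<Rightarrow> real) set \<Rightarrow> ('d \<Rightarrow> real) set" where
  "inferred q W = {x. \<forall>a b a' b'. consistent q W a b \<and> consistent q W a' b'
       \<longrightarrow> rect_ind a b x = rect_ind a' b' x}"

end

theory Submission
  imports Defs
begin

lemma pick:
  fixes C :: "'k::finite \<Rightarrow> 'a set" and sc :: "'k \<Rightarrow> 'a \<Rightarrow> real"
  assumes "finite S" "\<forall>k. C k \<subseteq> S"
  shows "\<exists>W\<subseteq>S. card W \<le> CARD('k) \<and>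
     (\<forall>k. C k \<noteq> {} \<longrightarrow> (\<exists>m\<in>W. m \<in> C k \<and> (\<forall>y\<in>C k. sc k m \<le> sc k y)))"
proof -
  have "\<forall>k. \<exists>m. C k \<noteq> {} \<longrightarrow> m \<in> C k \<and> (\<forall>y\<in>C k. sc k m \<le> sc k y)"
  proof
    fix k show "\<exists>m. C k \<noteq> {} \<longrightarrow> m \<in> C k \<and> (\<forall>y\<in>C k. sc k m \<le> sc k y)"
    proof (cases "C k = {}")
      case False
      have fin: "finite (C k)" using assms finite_subset by blast
      have "Min (sc k ` C k) \<in> sc k ` C k" using fin False by (intro Min_in) auto
      then obtain m where m: "m \<in> C k" "sc k m = Min (sc k ` C k)" by auto
      have "\<forall>y\<in>C k. sc k m \<le> sc k y" using m fin by auto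
      then show ?thesis using m by blast
    qed auto
  qed
  then obtain g where g: "\<forall>k. C k \<noteq> {} \<longrightarrow> g k \<in> C k \<and> (\<forall>y\<in>C k. sc k (g k) \<le> sc k y)"
    by metis
  let ?W = "g ` {k. C k \<noteq> {}}"
  have "?W \<subseteq> S" using g assms by blast
  moreover have "card ?W \<le> CARD('k)"
  proof -
    have "card ?W \<le> card {k. C k \<noteq> {}}" by (rule card_image_le) simp
    also have "\<dots> \<le> CARD('k)" by (rule card_mono) auto
    finally show ?thesis .
  qed
  moreover have "\<forall>k. C k \<noteq> {} \<longrightarrow> (\<exists>m\<in>?W. m \<in> C k \<and> (\<forall>y\<in>C k. sc k m \<le> sc k y))"
    using g by blast
  ultimately show ?thesis by blast
qed

theorem proposition4p1:
  fixes a b :: "'d::finite \<Rightarrow> ereal"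
    and S :: "('d \<Rightarrow> real) set"
    and q :: "('d \<Rightarrow> real) \<Rightarrow> bool \<times> 'd resp"
  assumes "is_rect a b"
    and "finite S"
    and "\<forall>x\<in>S. \<forall>y\<in>S. rect_ind a b x = rect_ind a b y"
    and "\<forall>x\<in>S. fst (q x) = rect_ind a b x \<and> snd (q x) \<in> odd_set a b x"
  shows "\<exists>W\<subseteq>S. card W \<le> 2 * CARD('d) \<and> inferred q S = inferred q W"
proof -
  have cardk: "CARD('d \<times> bool) = 2 * CARD('d)" by (simp add: card_UNIV_bool)
  have key: "\<exists>W\<subseteq>S. card W \<le> 2 * CARD('d) \<and>
     (\<forall>a' b'. consistent q W a' b' \<longrightarrow> consistent q S a' b')"
  proof (cases "\<exists>x0\<in>S. rect_ind a b x0")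
    case True
    then have pos: "\<forall>x\<in>S. rect_ind a b x" using assms(3) by blast
    have qx: "\<forall>x\<in>S. q x = (True, Star)"
      using pos assms(4) by (auto simp: odd_set_def prod_eq_iff)
    obtain W where W: "W \<subseteq> S" "card W \<le> CARD('d \<times> bool)"
      "\<forall>k. (\<lambda>_::'d\<times>bool. S) k \<noteq> {} \<longrightarrow> (\<exists>m\<in>W. m \<in> S \<and>
         (\<forall>y\<in>S. (\<lambda>(i,t) x. if t then - x i else x i) k m \<le> (\<lambda>(i,t) x. if t then - x i else x i) k y))"
      using pick[of S "\<lambda>_::'d\<times>bool. S" "\<lambda>(i,t) x. if t then - x i else x i"] assms(2) by blast
    have "\<forall>a' b'. consistent q W a' b' \<longrightarrow> consistent q S a' b'"
    proof (intro allI impI)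
      fix a' b' assume c: "consistent q W a' b'"
      have inW: "\<forall>m\<in>W. rect_ind a' b' m" using c qx W(1) unfolding consistent_def by force
      have "rect_ind a' b' x" if x: "x \<in> S" for x
        unfolding rect_ind_def
      proof
        fix i
        obtain m1 where m1: "m1 \<in> W" "\<forall>y\<in>S. m1 i \<le> y i" using W(3)[rule_format, of "(i,False)"] x by auto
        obtain m2 where m2: "m2 \<in> W" "\<forall>y\<in>S. - m2 i \<le> - y i" using W(3)[rule_format, of "(i,True)"] x by auto
        have "a' i \<le> ereal (m1 i)" using inW m1(1) unfolding rect_ind_def by blast
        also have "\<dots> \<le> ereal (x i)" using m1 x by auto
        finally have 1: "a' i \<le> ereal (x i)" .
        have "ereal (x i) \<le> ereal (m2 i)" using m2 x by force
        also have "\<dots> \<le> b' i" using inW m2(1) unfolding rect_ind_def by blast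
        finally show "a' i \<le> ereal (x i) \<and> ereal (x i) \<le> b' i" using 1 by blast
      qed
      then show "consistent q S a' b'" using c qx unfolding consistent_def
        by (auto simp: odd_set_def)
    qed
    then show ?thesis using W cardk by auto
  next
    case False
    then have neg: "\<forall>x\<in>S. \<not> rect_ind a b x" by blast
    define C where "C = (\<lambda>(i,t). {y\<in>S. snd (q y) = Out i t})"
    define sc where "sc = (\<lambda>(i::'d,t) (x::'d\<Rightarrow>real). if t then x i else - x i)"
    have Cs: "\<forall>k. C k \<subseteq> S" unfolding C_def by auto
    obtain W where W: "W \<subseteq> S" "card W \<le> CARD('d \<times> bool)"
      "\<forall>k. C k \<noteq> {} \<longrightarrow> (\<exists>m\<in>W. m \<in> C k \<and> (\<forall>y\<in>C k. sc k m \<le> sc k y))"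
      using pick[of S C sc] assms(2) Cs by blast
    have "\<forall>a' b'. consistent q W a' b' \<longrightarrow> consistent q S a' b'"
    proof (intro allI impI)
      fix a' b' assume c: "consistent q W a' b'"
      have "fst (q x) = rect_ind a' b' x \<and> snd (q x) \<in> odd_set a' b' x" if x: "x \<in> S" for x
      proof -
        have f: "fst (q x) = False" using neg assms(4) x by auto
        obtain i t where it: "snd (q x) = Out i t"
          using neg assms(4) x by (auto simp: odd_set_def)
        have "x \<in> C (i,t)" using x it unfolding C_def by auto
        then obtain m where m: "m \<in> W" "m \<in> C (i,t)" "\<forall>y\<in>C (i,t). sc (i,t) m \<le> sc (i,t) y"
          using W(3) by blast
        have mq: "snd (q m) = Out i t" using m(2) unfolding C_def by auto
        have mneg: "\<not> rect_ind a b m" using neg m(1) W(1) by auto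
        have fm: "fst (q m) = False" using mneg assms(4) m(1) W(1) by auto
        have cm: "\<not> rect_ind a' b' m" "Out i t \<in> odd_set a' b' m"
          using c m(1) fm mq unfolding consistent_def by metis+
        have le: "sc (i,t) m \<le> sc (i,t) x" using m(3) \<open>x \<in> C (i,t)\<close> by blast
        show ?thesis
        proof (cases t)
          case True
          have "b' i < ereal (m i)" using cm True by (auto simp: odd_set_def)
          moreover have "m i \<le> x i" using le True unfolding sc_def by auto
          ultimately have "b' i < ereal (x i)" by (meson ereal_less_eq(3) less_le_trans)
          then show ?thesis using f it True
            by (auto simp: odd_set_def rect_ind_def not_le)
        next
          case False
          have "ereal (m i) < a' i" using cm False by (auto simp: odd_set_def)
          moreover have "x i \<le> m i" using le False unfolding sc_def by auto
          ultimately have "ereal (x i) < a' i" by (meson ereal_less_eq(3) le_less_trans)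
          then show ?thesis using f it False
            by (auto simp: odd_set_def rect_ind_def not_le)
        qed
      qed
      then show "consistent q S a' b'" using c unfolding consistent_def by blast
    qed
    then show ?thesis using W cardk by auto
  qed
  then obtain W where W: "W \<subseteq> S" "card W \<le> 2 * CARD('d)"
    "\<forall>a' b'. consistent q W a' b' \<longrightarrow> consistent q S a' b'" by blast
  have "\<forall>a' b'. consistent q W a' b' = consistent q S a' b'"
    using W unfolding consistent_def by blast
  then have "inferred q S = inferred q W" unfolding inferred_def by simp
  then show ?thesis using W by blast
qed

end
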